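(* Let $\mathcal H$ be a complex Hilbert space, let $\mathbf A=(A_1,\dots,A_m)$ be an $m$-tuple of bounded self-adjoint operators on $\mathcal H$, and let $k$ be a positive integer. If $\Lambda_{\hat k}(\mathbf A)\neq\emptyset$ for some integer $\hat k\ge (m+2)k$, then $\Lambda_k(\mathbf A)$ is star-shaped and contains the convex set $\operatorname{conv}\Lambda_{\hat k}(\mathbf A)$, and every element of $\operatorname{conv}\Lambda_{\hat k}(\mathbf A)$ is a star center of $\Lambda_k(\mathbf A)$.
   Context: For an $m$-tuple $\mathbf A=(A_1,\dots,A_m)$ of bounded self-adjoint operators on a complex Hilbert space $\mathcal H$ and a positive integer $k$, the joint rank-$k$ numerical range is $\Lambda_k(\mathbf A)=\{(a_1,\dots,a_m)\in\mathbb R^m:$ there is an orthogonal projection $P$ of rank $k$ on $\mathcal H$ with $PA_jP=a_jP$ for $j=1,\dots,m\}$. A set $S\subseteq\mathbb R^m$ is star-shaped with star center $\mathbf c\in S$ if for every $\mathbf b\in S$ the line segment joining $\mathbf c$ and $\mathbf b$ lies in $S$. $\operatorname{conv}$ denotes convex hull. *)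

theory Defs
  imports "HOL-Analysis.Analysis"
begin

class complex_vector = real_vector +
  fixes scaleC :: "complex \<Rightarrow> 'a \<Rightarrow> 'a" (infixr \<open>*\<^sub>C\<close> 75)
  assumes scaleC_add_right: "a *\<^sub>C (x + y) = a *\<^sub>C x + a *\<^sub>C y"
    and scaleC_add_left: "(a + b) *\<^sub>C x = a *\<^sub>C x + b *\<^sub>C x"
    and scaleC_scaleC: "a *\<^sub>C (b *\<^sub>C x) = (a * b) *\<^sub>C x"
    and scaleC_one: "1 *\<^sub>C x = x"
    and scaleR_scaleC: "scaleR r x = complex_of_real r *\<^sub>C x"

class complex_inner = complex_vector + real_normed_vector +
  fixes cinner :: "'a \<Rightarrow> 'a \<Rightarrow> complex"
  assumes cinner_commute: "cinner x y = cnj (cinner y x)"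
    and cinner_add_left: "cinner (x + y) z = cinner x z + cinner y z"
    and cinner_scaleC_left: "cinner (r *\<^sub>C x) y = cnj r * cinner x y"
    and cinner_real: "Im (cinner x x) = 0"
    and cinner_ge_zero: "0 \<le> Re (cinner x x)"
    and cinner_eq_zero_iff: "cinner x x = 0 \<longleftrightarrow> x = 0"
    and norm_eq_sqrt_cinner: "norm x = sqrt (Re (cinner x x))"

class chilbert_space = complex_inner + complete_space

definition clinear :: "('a::complex_vector \<Rightarrow> 'b::complex_vector) \<Rightarrow> bool" where
  "clinear f \<longleftrightarrow> (\<forall>x y. f (x + y) = f x + f y) \<and> (\<forall>c x. f (c *\<^sub>C x) = c *\<^sub>C f x)"

definition bounded_operator :: "('a::complex_inner \<Rightarrow> 'a) \<Rightarrow> bool" where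
  "bounded_operator T \<longleftrightarrow> clinear T \<and> (\<exists>K. \<forall>x. norm (T x) \<le> K * norm x)"

definition selfadjoint :: "('a::complex_inner \<Rightarrow> 'a) \<Rightarrow> bool" where
  "selfadjoint T \<longleftrightarrow> bounded_operator T \<and> (\<forall>x y. cinner (T x) y = cinner x (T y))"

definition orth_projection :: "('a::complex_inner \<Rightarrow> 'a) \<Rightarrow> bool" where
  "orth_projection P \<longleftrightarrow> selfadjoint P \<and> P \<circ> P = P"

definition cspan :: "'a::complex_vector set \<Rightarrow> 'a set" where
  "cspan S = {\<Sum>v\<in>T. c v *\<^sub>C v | T c. finite T \<and> T \<subseteq> S}"

definition cindependent :: "'a::complex_vector set \<Rightarrow> bool" where
  "cindependent S \<longleftrightarrow> \<not> (\<exists>T c. finite T \<and> T \<subseteq> S \<and> (\<Sum>v\<in>T. c v *\<^sub>C v) = 0 \<and> (\<exists>v\<in>T. c v \<noteq> 0))"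

definition has_rank :: "('a::complex_vector \<Rightarrow> 'a) \<Rightarrow> nat \<Rightarrow> bool" where
  "has_rank P k \<longleftrightarrow> (\<exists>B. finite B \<and> card B = k \<and> cindependent B \<and> cspan B = range P)"

text \<open>An m-tuple of operators is a family indexed by a finite type 'i with CARD('i) = m;
  points of R^m are elements of real^'i.\<close>
definition joint_rank_k_numrange ::
  "('i::finite \<Rightarrow> 'a::complex_inner \<Rightarrow> 'a) \<Rightarrow> nat \<Rightarrow> (real^'i) set" where
  "joint_rank_k_numrange A k =
     {a. \<exists>P. orth_projection P \<and> has_rank P k \<and>
             (\<forall>j. P \<circ> A j \<circ> P = (\<lambda>x. complex_of_real (a $ j) *\<^sub>C P x))}"

definition star_center :: "'v::real_vector \<Rightarrow> 'v set \<Rightarrow> bool" where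
  "star_center c S \<longleftrightarrow> c \<in> S \<and> (\<forall>b\<in>S. closed_segment c b \<subseteq> S)"

end

theory Submission
  imports Defs
begin

interpretation cv: vector_space "scaleC :: complex \<Rightarrow> 'a::complex_vector \<Rightarrow> 'a"
  by unfold_locales (simp_all add: scaleC_add_right scaleC_add_left scaleC_scaleC scaleC_one)

lemma cspan_eq: "cspan S = cv.span S"
  by (simp add: cspan_def cv.span_explicit)

lemma cindependent_eq: "cindependent S \<longleftrightarrow> cv.independent S"
  by (simp add: cindependent_def cv.dependent_explicit)

declare [[show_types=false]]

lemma cinner_zero_left [simp]: "cinner 0 (y::'a::complex_inner) = 0"
proof -
  have "cinner (0 + 0) y = cinner 0 y + cinner 0 y" by (rule cinner_add_left)
  then show ?thesis by simp
qed

lemma cinner_zero_right [simp]: "cinner (y::'a::complex_inner) 0 = 0"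
  by (subst cinner_commute) simp

lemma cinner_add_right: "cinner (z::'a::complex_inner) (x + y) = cinner z x + cinner z y"
  by (subst (1 2 3) cinner_commute) (simp add: cinner_add_left)

lemma cinner_scaleC_right: "cinner (x::'a::complex_inner) (r *\<^sub>C y) = r * cinner x y"
  by (subst (1 2) cinner_commute) (simp add: cinner_scaleC_left)

lemma cinner_sum_left: "cinner (\<Sum>i\<in>I. f i) (y::'a::complex_inner) = (\<Sum>i\<in>I. cinner (f i) y)"
  by (induct I rule: infinite_finite_induct) (simp_all add: cinner_add_left)

lemma cinner_sum_right: "cinner (y::'a::complex_inner) (\<Sum>i\<in>I. f i) = (\<Sum>i\<in>I. cinner y (f i))"
  by (induct I rule: infinite_finite_induct) (simp_all add: cinner_add_right)

lemma cinner_minus_right: "cinner (z::'a::complex_inner) (- x) = - cinner z x"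
proof -
  have "cinner z (- x) = cinner z ((-1) *\<^sub>C x)" by (simp only: cv.scale_minus_left scaleC_one)
  also have "\<dots> = - cinner z x" unfolding cinner_scaleC_right by simp
  finally show ?thesis .
qed

lemma cinner_diff_right: "cinner (z::'a::complex_inner) (x - y) = cinner z x - cinner z y"
  unfolding diff_conv_add_uminus cinner_add_right cinner_minus_right by simp

lemma cinner_self_real: "cinner (x::'a::complex_inner) x = complex_of_real ((norm x)^2)"
proof -
  have "(norm x)^2 = Re (cinner x x)" by (simp add: norm_eq_sqrt_cinner cinner_ge_zero)
  then show ?thesis using cinner_real[of x] by (simp add: complex_eq_iff)
qed

lemma norm_scaleC: "norm (c *\<^sub>C (x::'a::complex_inner)) = cmod c * norm x"
proof -
  have "cinner (c *\<^sub>C x) (c *\<^sub>C x) = (cnj c * c) * cinner x x"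
    by (simp add: cinner_scaleC_left cinner_scaleC_right)
  also have "cnj c * c = complex_of_real ((cmod c)^2)"
    by (metis complex_norm_square mult.commute of_real_power)
  finally have "complex_of_real ((norm (c *\<^sub>C x))^2) = complex_of_real (((cmod c)^2) * (norm x)^2)"
    by (simp only: cinner_self_real of_real_mult)
  then have "(norm (c *\<^sub>C x))^2 = ((cmod c)^2) * (norm x)^2"
    by (simp only: of_real_eq_iff)
  then have "(norm (c *\<^sub>C x))^2 = (cmod c * norm x)^2" by (simp add: power_mult_distrib)
  then show ?thesis by (simp add: power2_eq_iff_nonneg)
qed

lemma cinner_diff_left: "cinner (x - y) (z::'a::complex_inner) = cinner x z - cinner y z"
  by (subst (1 2 3) cinner_commute) (simp add: cinner_diff_right)

lemma cauchy_unit: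
  fixes e y :: "'a::complex_inner"
  assumes "cinner e e = 1"
  shows "cmod (cinner e y) \<le> norm y"
proof -
  define c where "c = cinner e y"
  have ye: "cinner y e = cnj c" unfolding c_def by (rule cinner_commute)
  have "cinner (y - c *\<^sub>C e) (y - c *\<^sub>C e) = cinner y y - c * cnj c"
    unfolding cinner_diff_left cinner_diff_right cinner_scaleC_left cinner_scaleC_right ye assms
    by (simp add: c_def[symmetric] algebra_simps)
  moreover have "Re (c * cnj c) = (cmod c)^2"
    by (metis Re_complex_of_real complex_norm_square)
  ultimately have "Re (cinner y y) - (cmod c)^2 = Re (cinner (y - c *\<^sub>C e) (y - c *\<^sub>C e))"
    by simp
  also have "\<dots> \<ge> 0" by (rule cinner_ge_zero)
  finally have "(cmod c)^2 \<le> (norm y)^2"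
    by (simp add: norm_eq_sqrt_cinner cinner_ge_zero)
  then show ?thesis unfolding c_def by (simp add: power2_le_iff_abs_le)
qed


lemma clinear_add: "clinear f \<Longrightarrow> f (x + y) = f x + f y"
  by (simp add: clinear_def)

lemma clinear_scaleC: "clinear f \<Longrightarrow> f (c *\<^sub>C x) = c *\<^sub>C f x"
  by (simp add: clinear_def)

lemma clinear_zero: "clinear f \<Longrightarrow> f 0 = 0"
proof -
  assume f: "clinear f"
  have "f 0 = f ((0::complex) *\<^sub>C 0)" by simp
  also have "\<dots> = 0" unfolding clinear_scaleC[OF f] by simp
  finally show ?thesis .
qed

lemma clinear_sum: "clinear f \<Longrightarrow> f (\<Sum>i\<in>I. g i) = (\<Sum>i\<in>I. f (g i))"
proof (induct I rule: infinite_finite_induct)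
  case (insert i I)
  then show ?case using clinear_add[OF \<open>clinear f\<close>] by simp
qed (simp_all add: clinear_zero)

lemma clinear_subspace_range: "clinear f \<Longrightarrow> cv.subspace (range f)"
  unfolding cv.subspace_def
proof (intro conjI ballI allI)
  assume f: "clinear f"
  show "0 \<in> range f" using clinear_zero[OF f] by (metis rangeI)
  fix x y assume "x \<in> range f" "y \<in> range f"
  then obtain a b where "x = f a" "y = f b" by blast
  then show "x + y \<in> range f" using clinear_add[OF f, of a b] by (metis rangeI)
next
  fix c x assume f: "clinear f" and "x \<in> range f"
  then obtain a where "x = f a" by blast
  then show "c *\<^sub>C x \<in> range f" using clinear_scaleC[OF f, of c a] by (metis rangeI)
qed

definition orthonormal :: "(nat \<Rightarrow> 'a::complex_inner) \<Rightarrow> nat \<Rightarrow> bool" where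
  "orthonormal x k \<longleftrightarrow> (\<forall>i<k. \<forall>l<k. cinner (x i) (x l) = (if i = l then 1 else 0))"

definition proj :: "(nat \<Rightarrow> 'a::complex_inner) \<Rightarrow> nat \<Rightarrow> 'a \<Rightarrow> 'a" where
  "proj x k y = (\<Sum>i<k. cinner (x i) y *\<^sub>C x i)"

lemma proj_clinear: "clinear (proj x k)"
  unfolding clinear_def proj_def
  by (simp add: cinner_add_right cinner_scaleC_right scaleC_add_left sum.distrib
      cv.scale_sum_right)

lemma proj_inner:
  assumes "orthonormal x k" "l < k"
  shows "cinner (x l) (proj x k y) = cinner (x l) y"
proof -
  have "cinner (x l) (proj x k y) = (\<Sum>i<k. if i = l then cinner (x i) y else 0)"
    unfolding proj_def cinner_sum_right cinner_scaleC_right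
    using assms unfolding orthonormal_def by (intro sum.cong) auto
  also have "\<dots> = cinner (x l) y" using assms(2) by (simp add: sum.delta')
  finally show ?thesis .
qed

lemma proj_idem:
  assumes "orthonormal x k"
  shows "proj x k (proj x k y) = proj x k y"
  unfolding proj_def[of x k "proj x k y"] using proj_inner[OF assms]
  by (simp add: proj_def)

lemma proj_bounded:
  assumes "orthonormal x k"
  shows "norm (proj x k y) \<le> real k * norm y"
proof -
  have "norm (proj x k y) \<le> (\<Sum>i<k. norm (cinner (x i) y *\<^sub>C x i))"
    unfolding proj_def by (rule norm_sum)
  also have "\<dots> \<le> (\<Sum>i<k. norm y)"
  proof (rule sum_mono)
    fix i assume "i \<in> {..<k}"
    then have "cinner (x i) (x i) = 1" using assms unfolding orthonormal_def by auto
    moreover then have "norm (x i) = 1" by (simp add: norm_eq_sqrt_cinner)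
    ultimately show "norm (cinner (x i) y *\<^sub>C x i) \<le> norm y"
      by (simp add: norm_scaleC cauchy_unit)
  qed
  finally show ?thesis by simp
qed

lemma proj_selfadj: "cinner (proj x k y) z = cinner y (proj x k z)"
  unfolding proj_def cinner_sum_left cinner_sum_right cinner_scaleC_left cinner_scaleC_right
  by (rule sum.cong, simp, subst cinner_commute[of y], simp add: mult.commute)


lemma orthonormal_inj:
  assumes "orthonormal x k"
  shows "inj_on x {..<k}"
proof (rule inj_onI)
  fix i l assume il: "i \<in> {..<k}" "l \<in> {..<k}" "x i = x l"
  show "i = l"
  proof (rule ccontr)
    assume "i \<noteq> l"
    then have "cinner (x i) (x l) = 0" using assms il(1,2) unfolding orthonormal_def by auto
    moreover have "cinner (x i) (x i) = 1" using assms il(1) unfolding orthonormal_def by auto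
    ultimately show False using il by simp
  qed
qed

lemma orthonormal_set:
  assumes "orthonormal x k" "v \<in> x ` {..<k}" "w \<in> x ` {..<k}"
  shows "cinner v w = (if v = w then 1 else 0)"
proof -
  obtain i l where "i < k" "l < k" "v = x i" "w = x l" using assms(2,3) by auto
  moreover have "x i = x l \<Longrightarrow> i = l"
    using inj_onD[OF orthonormal_inj[OF assms(1)]] \<open>i < k\<close> \<open>l < k\<close> by auto
  ultimately show ?thesis using assms(1) unfolding orthonormal_def by auto
qed

lemma proj_base:
  assumes "orthonormal x k" "l < k"
  shows "proj x k (x l) = x l"
proof -
  have "proj x k (x l) = (\<Sum>i<k. if i = l then x i else 0)"
    unfolding proj_def using assms unfolding orthonormal_def by (intro sum.cong) auto
  also have "\<dots> = x l" using assms(2) by (simp add: sum.delta')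
  finally show ?thesis .
qed

lemma numrange_from_family:
  fixes A :: "'i::finite \<Rightarrow> 'a::complex_inner \<Rightarrow> 'a"
  assumes lin: "\<And>j. clinear (A j)" and on: "orthonormal x k"
    and cond: "\<And>j i l. i < k \<Longrightarrow> l < k \<Longrightarrow>
       cinner (x i) (A j (x l)) = (if i = l then complex_of_real (a $ j) else 0)"
  shows "a \<in> joint_rank_k_numrange A k"
proof -
  define P where "P = proj x k"
  have "bounded_operator P"
    unfolding bounded_operator_def P_def using proj_clinear proj_bounded[OF on] by blast
  then have op: "orth_projection P"
    unfolding orth_projection_def selfadjoint_def P_def
    using proj_selfadj proj_idem[OF on] by (auto simp: P_def)
  define B where "B = x ` {..<k}"
  have cardB: "card B = k" unfolding B_def using card_image[OF orthonormal_inj[OF on]] by simp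
  have indB: "cv.independent B"
    unfolding cv.dependent_explicit
  proof
    assume "\<exists>T u. finite T \<and> T \<subseteq> B \<and> (\<Sum>v\<in>T. u v *\<^sub>C v) = 0 \<and> (\<exists>v\<in>T. u v \<noteq> 0)"
    then obtain T u v0 where T: "finite T" "T \<subseteq> B" "(\<Sum>v\<in>T. u v *\<^sub>C v) = 0" "v0 \<in> T" "u v0 \<noteq> 0"
      by blast
    have "0 = cinner v0 (\<Sum>v\<in>T. u v *\<^sub>C v)" using T(3) by simp
    also have "\<dots> = (\<Sum>v\<in>T. if v = v0 then u v else 0)"
      unfolding cinner_sum_right cinner_scaleC_right
    proof (intro sum.cong refl)
      fix v assume "v \<in> T"
      then have "v \<in> B" "v0 \<in> B" using T by auto
      then have "cinner v0 v = (if v0 = v then 1 else 0)"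
        using orthonormal_set[OF on] unfolding B_def by blast
      then show "u v * cinner v0 v = (if v = v0 then u v else 0)" by auto
    qed
    also have "\<dots> = u v0" using T by (simp add: sum.delta')
    finally show False using T(5) by simp
  qed
  have "cv.span B \<subseteq> range P"
    by (rule cv.span_minimal) (auto simp: B_def P_def intro!: clinear_subspace_range proj_clinear
        proj_base[OF on, symmetric])
  moreover have "range P \<subseteq> cv.span B"
  proof
    fix z assume "z \<in> range P"
    then obtain y where "z = P y" by blast
    then show "z \<in> cv.span B" unfolding P_def proj_def B_def
      apply simp
      apply (rule cv.span_sum)
      apply (rule cv.span_scale)
      apply (rule cv.span_base)
      by auto
  qed
  ultimately have "cspan B = range P" by (simp add: cspan_eq)
  then have rk: "has_rank P k" unfolding has_rank_def
    using cardB indB by (auto simp: cindependent_eq B_def)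
  have "P \<circ> A j \<circ> P = (\<lambda>y. complex_of_real (a $ j) *\<^sub>C P y)" for j
  proof
    fix y
    have "cinner (x i) (A j (P y)) = complex_of_real (a $ j) * cinner (x i) y" if "i < k" for i
    proof -
      have "cinner (x i) (A j (P y)) = (\<Sum>l<k. cinner (x l) y * cinner (x i) (A j (x l)))"
        unfolding P_def proj_def clinear_sum[OF lin] clinear_scaleC[OF lin] cinner_sum_right
          cinner_scaleC_right ..
      also have "\<dots> = (\<Sum>l<k. if l = i then complex_of_real (a $ j) * cinner (x i) y else 0)"
        using cond that by (intro sum.cong) auto
      also have "\<dots> = complex_of_real (a $ j) * cinner (x i) y" using that by (simp add: sum.delta')
      finally show ?thesis .
    qed
    then have "P (A j (P y)) = (\<Sum>i<k. (complex_of_real (a $ j) * cinner (x i) y) *\<^sub>C x i)"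
      unfolding P_def proj_def[of x k "A j (proj x k y)"] by (intro sum.cong) (auto simp: P_def)
    also have "\<dots> = complex_of_real (a $ j) *\<^sub>C P y"
      unfolding P_def proj_def cv.scale_sum_right by (simp add: scaleC_scaleC)
    finally show "(P \<circ> A j \<circ> P) y = complex_of_real (a $ j) *\<^sub>C P y" by simp
  qed
  then show ?thesis unfolding joint_rank_k_numrange_def using op rk by blast
qed


lemma numrange_subspace:
  fixes A :: "'i::finite \<Rightarrow> 'a::complex_inner \<Rightarrow> 'a"
  assumes "a \<in> joint_rank_k_numrange A n"
  obtains V B where "cv.subspace V" "B \<subseteq> V" "cv.independent B" "finite B" "card B = n"
    "\<And>v w j. v \<in> V \<Longrightarrow> w \<in> V \<Longrightarrow> cinner v (A j w) = complex_of_real (a $ j) * cinner v w"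
proof -
  obtain P where P: "orth_projection P" "has_rank P n"
    "\<And>j. P \<circ> A j \<circ> P = (\<lambda>x. complex_of_real (a $ j) *\<^sub>C P x)"
    using assms unfolding joint_rank_k_numrange_def by blast
  have lin: "clinear P" and sa: "\<And>x y. cinner (P x) y = cinner x (P y)" and idem: "P \<circ> P = P"
    using P(1) unfolding orth_projection_def selfadjoint_def bounded_operator_def by auto
  obtain B where B: "finite B" "card B = n" "cindependent B" "cspan B = range P"
    using P(2) unfolding has_rank_def by blast
  have fixP: "P v = v" if vP: "v \<in> range P" for v
  proof -
    obtain u where "v = P u" using vP by blast
    moreover have "P (P u) = P u" using fun_cong[OF idem, of u] by simp
    ultimately show ?thesis by simp
  qed
  show ?thesis
  proof
    show "cv.subspace (range P)" by (rule clinear_subspace_range[OF lin])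
    show "B \<subseteq> range P" using B(4) cv.span_superset[of B] by (simp add: cspan_eq)
    show "cv.independent B" using B(3) by (simp add: cindependent_eq)
    show "finite B" "card B = n" using B by auto
    fix v w j assume vw: "v \<in> range P" "w \<in> range P"
    have "cinner v (A j w) = cinner (P v) (A j (P w))" using fixP[OF vw(1)] fixP[OF vw(2)] by simp
    also have "\<dots> = cinner v (P (A j (P w)))" by (rule sa)
    also have "P (A j (P w)) = complex_of_real (a $ j) *\<^sub>C P w"
      using fun_cong[OF P(3)[of j], of w] by simp
    finally show "cinner v (A j w) = complex_of_real (a $ j) * cinner v w"
      using fixP[OF vw(2)] by (simp add: cinner_scaleC_right)
  qed
qed

lemma constraint_subspace:
  assumes "cv.subspace V"
  shows "cv.subspace {v \<in> V. \<forall>y\<in>Y. cinner y v = (0::complex)}"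
  using assms unfolding cv.subspace_def
  by (auto simp: cinner_add_right cinner_scaleC_right)

lemma constraint_span:
  fixes V :: "'a::complex_inner set"
  assumes V: "cv.subspace V" and "finite Y"
  shows "\<exists>Z. finite Z \<and> card Z \<le> card Y \<and> V \<subseteq> cv.span ({v \<in> V. \<forall>y\<in>Y. cinner y v = 0} \<union> Z)"
  using \<open>finite Y\<close>
proof (induct Y rule: finite_induct)
  case empty
  show ?case by (intro exI[of _ "{}"]) (auto intro: cv.span_base)
next
  case (insert y Y0)
  define V0 where "V0 = {v \<in> V. \<forall>y\<in>Y0. cinner y v = 0}"
  define V1 where "V1 = {v \<in> V. \<forall>y'\<in>insert y Y0. cinner y' v = 0}"
  obtain Z0 where Z0: "finite Z0" "card Z0 \<le> card Y0" "V \<subseteq> cv.span (V0 \<union> Z0)"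
    using insert(3) unfolding V0_def by blast
  have V1eq: "V1 = {v \<in> V0. cinner y v = 0}" unfolding V0_def V1_def by auto
  have sV0: "cv.subspace V0" unfolding V0_def by (rule constraint_subspace[OF V])
  show ?case
  proof (cases "\<exists>v0\<in>V0. cinner y v0 \<noteq> 0")
    case True
    then obtain v0 where v0: "v0 \<in> V0" "cinner y v0 \<noteq> 0" by blast
    define Z where "Z = insert v0 Z0"
    have V0sub: "V0 \<subseteq> cv.span (V1 \<union> Z)"
    proof
      fix v assume v: "v \<in> V0"
      define c where "c = cinner y v / cinner y v0"
      have w: "v - c *\<^sub>C v0 \<in> V0" by (rule cv.subspace_diff[OF sV0 v cv.subspace_scale[OF sV0 v0(1)]])
      have "cinner y (v - c *\<^sub>C v0) = 0"
        unfolding cinner_diff_right cinner_scaleC_right c_def using v0(2) by simp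
      then have "v - c *\<^sub>C v0 \<in> V1" using w V1eq by simp
      then have "v - c *\<^sub>C v0 \<in> cv.span (V1 \<union> Z)" by (auto intro: cv.span_base)
      moreover have "c *\<^sub>C v0 \<in> cv.span (V1 \<union> Z)"
        by (rule cv.span_scale, rule cv.span_base) (simp add: Z_def)
      ultimately have "(v - c *\<^sub>C v0) + c *\<^sub>C v0 \<in> cv.span (V1 \<union> Z)" by (rule cv.span_add)
      then show "v \<in> cv.span (V1 \<union> Z)" by simp
    qed
    have "V0 \<union> Z0 \<subseteq> cv.span (V1 \<union> Z)"
      using V0sub by (auto simp: Z_def intro: cv.span_base)
    then have "cv.span (V0 \<union> Z0) \<subseteq> cv.span (V1 \<union> Z)"
      by (rule cv.span_minimal) simp
    moreover have "card Z \<le> card (insert y Y0)"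
      using Z0 insert(1,2) by (simp add: Z_def card_insert_if)
    ultimately show ?thesis using Z0 unfolding V1_def Z_def by (intro exI[of _ "insert v0 Z0"]) auto
  next
    case False
    then have "V1 = V0" using V1eq by auto
    then show ?thesis using Z0 insert(1,2) unfolding V1_def
      by (intro exI[of _ Z0]) auto
  qed
qed


lemma exists_orthonormal:
  fixes V :: "'a::complex_inner set"
  assumes V: "cv.subspace V" and B: "B \<subseteq> V" "cv.independent B" "finite B"
    and Y: "finite Y" and n: "k + card Y \<le> card B"
  shows "\<exists>x. orthonormal x k \<and> (\<forall>i<k. x i \<in> V \<and> (\<forall>y\<in>Y. cinner y (x i) = 0))"
proof -
  define V1 where "V1 = {v \<in> V. \<forall>y\<in>Y. cinner y v = 0}"
  have sV1: "cv.subspace V1" unfolding V1_def by (rule constraint_subspace[OF V])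
  obtain Z where Z: "finite Z" "card Z \<le> card Y" "V \<subseteq> cv.span (V1 \<union> Z)"
    using constraint_span[OF V Y] unfolding V1_def by blast
  have "r \<le> k \<Longrightarrow> \<exists>x. orthonormal x r \<and> (\<forall>i<r. x i \<in> V1)" for r
  proof (induct r)
    case 0
    show ?case by (simp add: orthonormal_def)
  next
    case (Suc r)
    then obtain x where x: "orthonormal x r" "\<And>i. i < r \<Longrightarrow> x i \<in> V1" by auto
    define X where "X = x ` {..<r}"
    have "\<exists>v\<in>V1. v \<notin> cv.span X"
    proof (rule ccontr)
      assume "\<not> ?thesis"
      then have "V1 \<subseteq> cv.span X" by auto
      then have "V1 \<union> Z \<subseteq> cv.span (X \<union> Z)"
        using cv.span_mono[of X "X \<union> Z"] cv.span_superset[of "X \<union> Z"] by blast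
      then have "cv.span (V1 \<union> Z) \<subseteq> cv.span (X \<union> Z)"
        by (rule cv.span_minimal) simp
      then have "B \<subseteq> cv.span (X \<union> Z)" using B(1) Z(3) by blast
      then have "card B \<le> card (X \<union> Z)"
        using cv.independent_span_bound[of "X \<union> Z" B] B(2) Z(1) by (simp add: X_def)
      also have "\<dots> \<le> card X + card Z" by (rule card_Un_le)
      also have "card X \<le> r" unfolding X_def using card_image_le[of "{..<r}" x] by simp
      finally show False using Z(2) n Suc(2) by simp
    qed
    then obtain v where v: "v \<in> V1" "v \<notin> cv.span X" by blast
    define w where "w = v - proj x r v"
    have pX: "proj x r v \<in> cv.span X" unfolding proj_def X_def
      apply (rule cv.span_sum)
      apply (rule cv.span_scale)
      apply (rule cv.span_base)
      by auto
    have pV: "proj x r v \<in> V1" unfolding proj_def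
      by (rule cv.subspace_sum[OF sV1], rule cv.subspace_scale[OF sV1]) (use x in auto)
    have wV: "w \<in> V1" unfolding w_def by (rule cv.subspace_diff[OF sV1 v(1) pV])
    have wnz: "w \<noteq> 0"
    proof
      assume "w = 0"
      then have "v = proj x r v" unfolding w_def by simp
      then show False using v(2) pX by simp
    qed
    have worth: "cinner (x l) w = 0" if "l < r" for l
      unfolding w_def cinner_diff_right proj_inner[OF x(1) that] by simp
    define e where "e = complex_of_real (1 / norm w) *\<^sub>C w"
    have nw: "norm w \<noteq> 0" using wnz by simp
    have "norm e = 1" unfolding e_def norm_scaleC norm_of_real using nw by simp
    then have ee: "cinner e e = 1" by (simp add: cinner_self_real)
    have eV: "e \<in> V1" unfolding e_def by (rule cv.subspace_scale[OF sV1 wV])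
    have xe: "cinner (x l) e = 0" if "l < r" for l
      unfolding e_def cinner_scaleC_right worth[OF that] by simp
    have ex: "cinner e (x l) = 0" if "l < r" for l
      using xe[OF that] by (subst cinner_commute) simp
    define x' where "x' = x(r := e)"
    have "orthonormal x' (Suc r)"
      unfolding orthonormal_def
    proof (intro allI impI)
      fix i l assume "i < Suc r" "l < Suc r"
      then consider "i = r" "l = r" | "i = r" "l < r" | "i < r" "l = r" | "i < r" "l < r"
        by linarith
      then show "cinner (x' i) (x' l) = (if i = l then 1 else 0)"
        by cases (use x(1) ee xe ex in \<open>auto simp: x'_def orthonormal_def\<close>)
    qed
    moreover have "\<forall>i<Suc r. x' i \<in> V1" using x(2) eV by (auto simp: x'_def less_Suc_eq)
    ultimately show ?case by blast
  qed
  then obtain x where "orthonormal x k" "\<forall>i<k. x i \<in> V1" by blast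
  then show ?thesis unfolding V1_def by blast
qed

lemma star_center_comb:
  fixes S :: "'v::real_vector set"
  assumes c1: "star_center c1 S" and c2: "star_center c2 S" and l: "0 \<le> l" "l \<le> 1"
  shows "star_center ((1 - l) *\<^sub>R c1 + l *\<^sub>R c2) S"
proof -
  define c where "c = (1 - l) *\<^sub>R c1 + l *\<^sub>R c2"
  have c1S: "c1 \<in> S" "\<And>b. b \<in> S \<Longrightarrow> closed_segment c1 b \<subseteq> S"
    using c1 unfolding star_center_def by auto
  have c2S: "c2 \<in> S" "\<And>b. b \<in> S \<Longrightarrow> closed_segment c2 b \<subseteq> S"
    using c2 unfolding star_center_def by auto
  have "c \<in> closed_segment c1 c2" unfolding c_def closed_segment_def using l by auto
  then have cS: "c \<in> S" using c1S(2)[OF c2S(1)] by blast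
  have "closed_segment c b \<subseteq> S" if bS: "b \<in> S" for b
  proof
    fix p assume "p \<in> closed_segment c b"
    then obtain s where s: "0 \<le> s" "s \<le> 1" "p = (1 - s) *\<^sub>R c + s *\<^sub>R b"
      unfolding closed_segment_def by auto
    define \<gamma> where "\<gamma> = 1 - (1 - s) * l"
    show "p \<in> S"
    proof (cases "\<gamma> = 0")
      case True
      then have "(1 - s) * l = 1" unfolding \<gamma>_def by simp
      moreover have "(1 - s) * l \<le> 1 * 1" using s l by (intro mult_mono) auto
      moreover have "s = 0"
      proof (rule ccontr)
        assume "s \<noteq> 0"
        then have "1 - s < 1" using s by simp
        moreover have "(1 - s) * l \<le> 1 - s" using mult_left_mono[of l 1 "1 - s"] s l by simp
        ultimately have "(1 - s) * l < 1" by linarith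
        then show False using \<open>(1 - s) * l = 1\<close> by simp
      qed
      ultimately show ?thesis using s cS by simp
    next
      case False
      have gpos: "\<gamma> > 0"
      proof -
        have "(1 - s) * l \<le> 1 * 1" using s l by (intro mult_mono) auto
        then show ?thesis using False unfolding \<gamma>_def by simp
      qed
      define q where "q = ((1 - s) * (1 - l) / \<gamma>) *\<^sub>R c1 + (s / \<gamma>) *\<^sub>R b"
      have "s \<le> \<gamma>"
      proof -
        have "(1 - s) * l \<le> (1 - s) * 1" using s l by (intro mult_left_mono) auto
        then show ?thesis unfolding \<gamma>_def by simp
      qed
      then have u: "0 \<le> s / \<gamma>" "s / \<gamma> \<le> 1" using s gpos by auto
      have "1 - s / \<gamma> = (1 - s) * (1 - l) / \<gamma>"
        using gpos unfolding \<gamma>_def by (simp add: field_simps)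
      then have "q = (1 - s / \<gamma>) *\<^sub>R c1 + (s / \<gamma>) *\<^sub>R b" unfolding q_def by simp
      then have "q \<in> closed_segment c1 b" unfolding closed_segment_def using u by blast
      then have qS: "q \<in> S" using c1S(2)[OF bS] by blast
      have g1: "\<gamma> \<le> 1" using gpos \<open>s \<le> \<gamma>\<close> s l unfolding \<gamma>_def by simp
      have "(1 - \<gamma>) *\<^sub>R c2 + \<gamma> *\<^sub>R q = ((1 - s) * l) *\<^sub>R c2 + ((1 - s) * (1 - l)) *\<^sub>R c1 + s *\<^sub>R b"
        unfolding q_def scaleR_add_right scaleR_scaleR using gpos unfolding \<gamma>_def by simp
      also have "\<dots> = p" unfolding s(3) c_def by (simp add: algebra_simps)
      finally have "p \<in> closed_segment c2 q" unfolding closed_segment_def using gpos g1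
        by (intro CollectI exI[of _ \<gamma>]) auto
      then show "p \<in> S" using c2S(2)[OF qS] by blast
    qed
  qed
  then show ?thesis unfolding star_center_def c_def[symmetric] using cS by blast
qed


lemma cinner_expand:
  fixes p q r s :: "'a::complex_inner"
  shows "cinner (\<alpha> *\<^sub>C p + \<beta> *\<^sub>C q) (\<alpha> *\<^sub>C r + \<beta> *\<^sub>C s) =
    cnj \<alpha> * \<alpha> * cinner p r + cnj \<alpha> * \<beta> * cinner p s + cnj \<beta> * \<alpha> * cinner q r + cnj \<beta> * \<beta> * cinner q s"
  by (simp add: cinner_add_left cinner_add_right cinner_scaleC_left cinner_scaleC_right algebra_simps)

lemma selfadjoint_clinear: "selfadjoint T \<Longrightarrow> clinear T"
  by (simp add: selfadjoint_def bounded_operator_def)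

lemma selfadjoint_inner: "selfadjoint T \<Longrightarrow> cinner (T x) y = cinner x (T y)"
  by (simp add: selfadjoint_def)

lemma numrange_mono:
  fixes A :: "'i::finite \<Rightarrow> 'a::complex_inner \<Rightarrow> 'a"
  assumes sa: "\<And>j. selfadjoint (A j)" and a: "a \<in> joint_rank_k_numrange A khat" and kk: "k \<le> khat"
  shows "a \<in> joint_rank_k_numrange A k"
proof -
  obtain V B where VB: "cv.subspace V" "B \<subseteq> V" "cv.independent B" "finite B" "card B = khat"
    "\<And>v w j. v \<in> V \<Longrightarrow> w \<in> V \<Longrightarrow> cinner v (A j w) = complex_of_real (a $ j) * cinner v w"
    using numrange_subspace[OF a] by metis
  obtain u where u: "orthonormal u k" "\<And>i. i < k \<Longrightarrow> u i \<in> V"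
    using exists_orthonormal[OF VB(1-4), of "{}" k] VB(5) kk by auto
  show ?thesis
  proof (rule numrange_from_family[OF selfadjoint_clinear[OF sa] u(1)])
    fix j i l assume "i < k" "l < k"
    then show "cinner (u i) (A j (u l)) = (if i = l then complex_of_real (a $ j) else 0)"
      using VB(6)[OF u(2) u(2)] u(1) unfolding orthonormal_def by auto
  qed
qed

lemma key_lemma:
  fixes A :: "'i::finite \<Rightarrow> 'a::complex_inner \<Rightarrow> 'a"
  assumes sa: "\<And>j. selfadjoint (A j)" and a: "a \<in> joint_rank_k_numrange A khat"
    and b: "b \<in> joint_rank_k_numrange A k" and kh: "(CARD('i) + 2) * k \<le> khat"
    and t: "0 \<le> t" "t \<le> 1"
  shows "t *\<^sub>R a + (1 - t) *\<^sub>R b \<in> joint_rank_k_numrange A k"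
proof -
  obtain W C where WC: "cv.subspace W" "C \<subseteq> W" "cv.independent C" "finite C" "card C = k"
    "\<And>v w j. v \<in> W \<Longrightarrow> w \<in> W \<Longrightarrow> cinner v (A j w) = complex_of_real (b $ j) * cinner v w"
    using numrange_subspace[OF b] by metis
  obtain w where w: "orthonormal w k" "\<And>i. i < k \<Longrightarrow> w i \<in> W"
    using exists_orthonormal[OF WC(1-4), of "{}" k] WC(5) by auto
  obtain V B where VB: "cv.subspace V" "B \<subseteq> V" "cv.independent B" "finite B" "card B = khat"
    "\<And>v w j. v \<in> V \<Longrightarrow> w \<in> V \<Longrightarrow> cinner v (A j w) = complex_of_real (a $ j) * cinner v w"
    using numrange_subspace[OF a] by metis
  define Y where "Y = w ` {..<k} \<union> (\<Union>j. (\<lambda>i. A j (w i)) ` {..<k})"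
  have finY: "finite Y" unfolding Y_def by simp
  have "card Y \<le> card (w ` {..<k}) + card (\<Union>j. (\<lambda>i. A j (w i)) ` {..<k})"
    unfolding Y_def by (rule card_Un_le)
  also have "card (w ` {..<k}) \<le> k" using card_image_le[of "{..<k}" w] by simp
  also have "card (\<Union>j. (\<lambda>i. A j (w i)) ` {..<k}) \<le> (\<Sum>j\<in>UNIV. card ((\<lambda>i. A j (w i)) ` {..<k}))"
    by (rule card_UN_le) simp
  also have "\<dots> \<le> (\<Sum>j\<in>(UNIV::'i set). k)"
    by (rule sum_mono) (use card_image_le[of "{..<k}"] in auto)
  also have "\<dots> = CARD('i) * k" by simp
  finally have cY: "k + card Y \<le> khat" using kh by (simp add: algebra_simps)
  obtain u where u: "orthonormal u k" "\<And>i. i < k \<Longrightarrow> u i \<in> V"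
    "\<And>i y. i < k \<Longrightarrow> y \<in> Y \<Longrightarrow> cinner y (u i) = 0"
    using exists_orthonormal[OF VB(1-4) finY, of k] VB(5) cY by auto
  have uw: "cinner (u i) (w l) = 0" if "i < k" "l < k" for i l
  proof -
    have "cinner (w l) (u i) = 0" using u(3)[OF that(1)] that(2) unfolding Y_def by auto
    then show ?thesis by (subst cinner_commute) simp
  qed
  have wu: "cinner (w i) (u l) = 0" if "i < k" "l < k" for i l
    using u(3)[OF that(2)] that(1) unfolding Y_def by auto
  have uAw: "cinner (u i) (A j (w l)) = 0" if "i < k" "l < k" for i l j
  proof -
    have "cinner (A j (w l)) (u i) = 0" using u(3)[OF that(1)] that(2) unfolding Y_def by auto
    then show ?thesis by (subst cinner_commute) simp
  qed
  have wAu: "cinner (w i) (A j (u l)) = 0" if "i < k" "l < k" for i l j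
  proof -
    have "cinner (A j (w i)) (u l) = 0" using u(3)[OF that(2)] that(1) unfolding Y_def by auto
    then show ?thesis by (simp add: selfadjoint_inner[OF sa])
  qed
  define \<alpha> where "\<alpha> = complex_of_real (sqrt t)"
  define \<beta> where "\<beta> = complex_of_real (sqrt (1 - t))"
  have aa: "cnj \<alpha> * \<alpha> = complex_of_real t" unfolding \<alpha>_def using t
    by (simp flip: of_real_mult)
  have bb: "cnj \<beta> * \<beta> = complex_of_real (1 - t)" unfolding \<beta>_def using t
    by (simp flip: of_real_mult)
  define x where "x i = \<alpha> *\<^sub>C u i + \<beta> *\<^sub>C w i" for i
  have on: "orthonormal x k"
    unfolding orthonormal_def
  proof (intro allI impI)
    fix i l assume il: "i < k" "l < k"
    have "cinner (x i) (x l) = complex_of_real t * cinner (u i) (u l) + complex_of_real (1 - t) * cinner (w i) (w l)"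
      unfolding x_def cinner_expand aa bb uw[OF il] wu[OF il] by simp
    also have "\<dots> = (if i = l then 1 else 0)"
      using u(1) w(1) il unfolding orthonormal_def by (simp flip: distrib_right of_real_add)
    finally show "cinner (x i) (x l) = (if i = l then 1 else 0)" .
  qed
  show ?thesis
  proof (rule numrange_from_family[OF selfadjoint_clinear[OF sa] on])
    fix j i l assume il: "i < k" "l < k"
    have Ax: "A j (x l) = \<alpha> *\<^sub>C A j (u l) + \<beta> *\<^sub>C A j (w l)"
      unfolding x_def clinear_add[OF selfadjoint_clinear[OF sa]] clinear_scaleC[OF selfadjoint_clinear[OF sa]] ..
    have "cinner (x i) (A j (x l)) = complex_of_real t * cinner (u i) (A j (u l))
        + complex_of_real (1 - t) * cinner (w i) (A j (w l))"
      unfolding Ax unfolding x_def cinner_expand aa bb uAw[OF il] wAu[OF il] by simp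
    also have "\<dots> = complex_of_real t * (complex_of_real (a $ j) * cinner (u i) (u l))
        + complex_of_real (1 - t) * (complex_of_real (b $ j) * cinner (w i) (w l))"
      using VB(6)[OF u(2)[OF il(1)] u(2)[OF il(2)]] WC(6)[OF w(2)[OF il(1)] w(2)[OF il(2)]] by simp
    also have "\<dots> = (if i = l then complex_of_real ((t *\<^sub>R a + (1 - t) *\<^sub>R b) $ j) else 0)"
      using u(1) w(1) il unfolding orthonormal_def by simp
    finally show "cinner (x i) (A j (x l)) = (if i = l then complex_of_real ((t *\<^sub>R a + (1 - t) *\<^sub>R b) $ j) else 0)" .
  qed
qed


theorem theorem3p1:
  fixes A :: "'i::finite \<Rightarrow> 'h::chilbert_space \<Rightarrow> 'h"
    and k khat :: nat
  assumes "\<And>j. selfadjoint (A j)"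
    and "k > 0"
    and "khat \<ge> (CARD('i) + 2) * k"
    and "joint_rank_k_numrange A khat \<noteq> {}"
  shows "starlike (joint_rank_k_numrange A k)
     \<and> convex hull (joint_rank_k_numrange A khat) \<subseteq> joint_rank_k_numrange A k
     \<and> (\<forall>c \<in> convex hull (joint_rank_k_numrange A khat). star_center c (joint_rank_k_numrange A k))"
proof -
  let ?L = "joint_rank_k_numrange A k"
  let ?H = "joint_rank_k_numrange A khat"
  have kk: "k \<le> khat" using assms(3) by (simp add: algebra_simps)
  have sc: "star_center a ?L" if aH: "a \<in> ?H" for a
    unfolding star_center_def
  proof (intro conjI ballI subsetI)
    show "a \<in> ?L" by (rule numrange_mono[OF assms(1) aH kk])
    fix b p assume bL: "b \<in> ?L" and "p \<in> closed_segment a b"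
    then obtain u where u: "0 \<le> u" "u \<le> 1" "p = (1 - u) *\<^sub>R a + u *\<^sub>R b"
      unfolding closed_segment_def by auto
    have "(1 - u) *\<^sub>R a + (1 - (1 - u)) *\<^sub>R b \<in> ?L"
      by (rule key_lemma[OF assms(1) aH bL assms(3)]) (use u in auto)
    then show "p \<in> ?L" using u by simp
  qed
  have cvx: "convex {c. star_center c ?L}"
    unfolding convex_def
  proof (intro ballI allI impI)
    fix x y and u v :: real
    assume "x \<in> {c. star_center c ?L}" "y \<in> {c. star_center c ?L}" "0 \<le> u" "0 \<le> v" "u + v = 1"
    then show "u *\<^sub>R x + v *\<^sub>R y \<in> {c. star_center c ?L}"
      using star_center_comb[of x ?L y v] by (auto simp: eq_diff_eq[symmetric])
  qed
  have hull: "convex hull ?H \<subseteq> {c. star_center c ?L}"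
    by (rule hull_minimal) (use sc cvx in auto)
  then have sub: "convex hull ?H \<subseteq> ?L" unfolding star_center_def by auto
  obtain a where "a \<in> ?H" using assms(4) by blast
  then have "starlike ?L" using sc unfolding starlike_def star_center_def by blast
  then show ?thesis using hull sub by auto
qed

end
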